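(* Let $f_0$ be an arithmetic function with $f_0(1)=1$ and let $m>1$. Let $\alpha$ be a finite alphabet and $\mathcal R$ a set of words over $\alpha$ (the $\mathcal R$-restricted words) such that for every $n\ge1$, $f_{m-1}(n)$ equals the number of words of length $n-1$ over $\alpha$ belonging to $\mathcal R$. Let $x$ be a letter not in $\alpha$. Then for all $1\le k\le n$, $c_m(n,k)$ equals the number of $\mathcal R$-restricted words of length $n-1$ over $\alpha\cup\{x\}$ in which $x$ appears exactly $k-1$ times.
   Context: An arithmetic function is a function $f_0:\{1,2,\ldots\}\to\mathbb{C}$. For $m\ge 1$, $f_m$ is the invert transform of $f_{m-1}$, i.e. $f_m(n)=f_{m-1}(n)+\sum_{i=1}^{n-1}f_{m-1}(i)f_m(n-i)$ for $n\ge1$. For $m\ge1$ the numbers $c_m(n,k)$, $0\le k\le n$, are defined by $c_m(0,0)=1$, $c_m(n,0)=0$ for $n\ge1$, and $c_m(n,k)=\sum_{i=1}^{n-k+1}f_{m-1}(i)\,c_m(n-i,k-1)$ for $1\le k\le n$. Words may be empty (length $0$). The restriction $\mathcal R$ concerns only letters of $\alpha$: a word over $\alpha\cup\{x\}$ with exactly $k-1$ occurrences of $x$ is written uniquely as $w_1\,x\,w_2\,x\cdots x\,w_k$ with each $w_j$ a (possibly empty) word over $\alpha$, and it is called $\mathcal R$-restricted if every $w_j$ belongs to $\mathcal R$. *)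

theory Defs
  imports Complex_Main
begin

text \<open>Arithmetic functions are modelled as functions nat => complex; the value at 0
is irrelevant (never used).\<close>

function invt :: "(nat \<Rightarrow> complex) \<Rightarrow> nat \<Rightarrow> complex" where
  "invt g n = (if n = 0 then 0
               else g n + (\<Sum>i\<in>{1..n-1}. g i * invt g (n - i)))"
  by pat_completeness auto
termination
  by (relation "measure (\<lambda>(g, n). n)") auto

definition fiter :: "(nat \<Rightarrow> complex) \<Rightarrow> nat \<Rightarrow> nat \<Rightarrow> complex" where
  "fiter f0 m = (invt ^^ m) f0"

fun ctri :: "(nat \<Rightarrow> complex) \<Rightarrow> nat \<Rightarrow> nat \<Rightarrow> complex" where
  "ctri g n 0 = (if n = 0 then 1 else 0)"
| "ctri g n (Suc k) = (if Suc k \<le> n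
      then (\<Sum>i\<in>{1..n - Suc k + 1}. g i * ctri g (n - i) k) else 0)"

definition cm :: "(nat \<Rightarrow> complex) \<Rightarrow> nat \<Rightarrow> nat \<Rightarrow> nat \<Rightarrow> complex" where
  "cm f0 m n k = ctri (fiter f0 (m - 1)) n k"

fun joinx :: "'a \<Rightarrow> 'a list list \<Rightarrow> 'a list" where
  "joinx x [] = []"
| "joinx x [u] = u"
| "joinx x (u # v # us) = u @ x # joinx x (v # us)"

definition restricted :: "'a set \<Rightarrow> 'a list set \<Rightarrow> 'a \<Rightarrow> 'a list \<Rightarrow> bool" where
  "restricted \<alpha> R x w \<longleftrightarrow>
     (\<exists>ws. ws \<noteq> [] \<and> w = joinx x ws \<and>
           (\<forall>u\<in>set ws. set u \<subseteq> \<alpha> \<and> u \<in> R))"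

end

theory Submission
  imports Defs
begin

definition Aset :: "'a list set \<Rightarrow> nat \<Rightarrow> nat \<Rightarrow> 'a list list set" where
  "Aset R k n = {ws. length ws = k \<and> set ws \<subseteq> R \<and> sum_list (map length ws) + k = n}"

lemma Aset_finite:
  assumes "finite \<alpha>" "R \<subseteq> lists \<alpha>"
  shows "finite (Aset R k n)"
proof -
  have f1: "finite {u. set u \<subseteq> \<alpha> \<and> length u \<le> n}"
    using finite_lists_length_le[OF assms(1)] by simp
  have "Aset R k n \<subseteq> {ws. set ws \<subseteq> {u. set u \<subseteq> \<alpha> \<and> length u \<le> n} \<and> length ws = k}"
  proof
    fix ws assume "ws \<in> Aset R k n"
    then have h: "length ws = k" "set ws \<subseteq> R" "sum_list (map length ws) + k = n"
      by (auto simp: Aset_def)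
    have "\<forall>u\<in>set ws. length u \<le> n"
    proof
      fix u assume "u \<in> set ws"
      then have "length u \<le> sum_list (map length ws)"
        using member_le_sum_list[of "length u" "map length ws"] by auto
      with h show "length u \<le> n" by simp
    qed
    with h assms(2) show "ws \<in> {ws. set ws \<subseteq> {u. set u \<subseteq> \<alpha> \<and> length u \<le> n} \<and> length ws = k}"
      by auto
  qed
  moreover have "finite {ws. set ws \<subseteq> {u. set u \<subseteq> \<alpha> \<and> length u \<le> n} \<and> length ws = k}"
    using finite_lists_length_eq[OF f1] by simp
  ultimately show ?thesis by (rule finite_subset)
qed

lemma Aset_0: "Aset R 0 n = (if n = 0 then {[]} else {})"
  by (auto simp: Aset_def)

lemma Aset_empty: "n < k \<Longrightarrow> Aset R k n = {}"
  by (auto simp: Aset_def)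

lemma Aset_Suc:
  assumes "R \<subseteq> lists \<alpha>"
  shows "Aset R (Suc k) n = (\<Union>i\<in>{1..n}. (\<lambda>(u,ws). u#ws) `
     ({w \<in> lists \<alpha>. length w = i - 1 \<and> w \<in> R} \<times> Aset R k (n-i)))"
proof (rule set_eqI, rule iffI)
  fix ws assume "ws \<in> Aset R (Suc k) n"
  then obtain u ws' where ws: "ws = u#ws'" "length ws' = k" "u \<in> R" "set ws' \<subseteq> R"
    "length u + sum_list (map length ws') + Suc k = n"
    by (cases ws) (auto simp: Aset_def)
  have "u \<in> lists \<alpha>" using ws assms by auto
  moreover have "ws' \<in> Aset R k (n - (length u + 1))" using ws by (auto simp: Aset_def)
  moreover have "length u + 1 \<in> {1..n}" using ws by auto
  ultimately show "ws \<in> (\<Union>i\<in>{1..n}. (\<lambda>(u,ws). u#ws) `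
     ({w \<in> lists \<alpha>. length w = i - 1 \<and> w \<in> R} \<times> Aset R k (n-i)))"
    using ws by (intro UN_I[of "length u + 1"]) (auto intro!: image_eqI[of _ _ "(u,ws')"])
next
  fix ws assume "ws \<in> (\<Union>i\<in>{1..n}. (\<lambda>(u,ws). u#ws) `
     ({w \<in> lists \<alpha>. length w = i - 1 \<and> w \<in> R} \<times> Aset R k (n-i)))"
  then obtain i u ws' where "i \<in> {1..n}" "ws = u#ws'" "length u = i - 1" "u \<in> R"
     "ws' \<in> Aset R k (n-i)" by auto
  then show "ws \<in> Aset R (Suc k) n" by (auto simp: Aset_def)
qed

lemma card_Aset_Suc:
  assumes "finite \<alpha>" "R \<subseteq> lists \<alpha>"
  shows "card (Aset R (Suc k) n) = (\<Sum>i\<in>{1..n}.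
     card {w \<in> lists \<alpha>. length w = i - 1 \<and> w \<in> R} * card (Aset R k (n-i)))"
proof -
  let ?B = "\<lambda>i. {w \<in> lists \<alpha>. length w = i - 1 \<and> w \<in> R}"
  have fB: "finite (?B i)" for i
    by (rule finite_subset[OF _ finite_lists_length_eq[OF assms(1), of "i - 1"]]) auto
  have inj: "inj_on (\<lambda>(u,ws). u#ws) X" for X :: "('a list \<times> 'a list list) set"
    by (auto simp: inj_on_def)
  have "card (Aset R (Suc k) n) = (\<Sum>i\<in>{1..n}. card ((\<lambda>(u,ws). u#ws) ` (?B i \<times> Aset R k (n-i))))"
    unfolding Aset_Suc[OF assms(2)]
  proof (rule card_UN_disjoint)
    show "finite {1..n}" by simp
    show "\<forall>i\<in>{1..n}. finite ((\<lambda>(u,ws). u#ws) ` (?B i \<times> Aset R k (n-i)))"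
      using fB Aset_finite[OF assms] by auto
    show "\<forall>i\<in>{1..n}. \<forall>j\<in>{1..n}. i \<noteq> j \<longrightarrow>
      (\<lambda>(u,ws). u#ws) ` (?B i \<times> Aset R k (n-i)) \<inter> (\<lambda>(u,ws). u#ws) ` (?B j \<times> Aset R k (n-j)) = {}"
      by auto
  qed
  also have "\<dots> = (\<Sum>i\<in>{1..n}. card (?B i) * card (Aset R k (n-i)))"
    by (intro sum.cong refl) (simp add: card_image[OF inj] card_cartesian_product)
  finally show ?thesis .
qed

lemma ctri_Aset:
  assumes "finite \<alpha>" "R \<subseteq> lists \<alpha>"
    and hg: "\<And>i. i \<ge> 1 \<Longrightarrow> g i = of_nat (card {w \<in> lists \<alpha>. length w = i - 1 \<and> w \<in> R})"
  shows "ctri g n k = of_nat (card (Aset R k n))"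
proof (induction k arbitrary: n)
  case 0
  then show ?case by (simp add: Aset_0)
next
  case (Suc k)
  let ?B = "\<lambda>i. {w \<in> lists \<alpha>. length w = i - 1 \<and> w \<in> R}"
  show ?case
  proof (cases "Suc k \<le> n")
    case False
    then show ?thesis by (simp add: Aset_empty)
  next
    case True
    have "ctri g n (Suc k) = (\<Sum>i\<in>{1..n - Suc k + 1}. g i * ctri g (n - i) k)"
      using True by simp
    also have "\<dots> = (\<Sum>i\<in>{1..n}. g i * ctri g (n - i) k)"
    proof (rule sum.mono_neutral_left)
      show "finite {1..n}" by simp
      show "{1..n - Suc k + 1} \<subseteq> {1..n}" using True by auto
      show "\<forall>i\<in>{1..n} - {1..n - Suc k + 1}. g i * ctri g (n - i) k = 0"
        using Suc.IH by (auto simp: Aset_empty)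
    qed
    also have "\<dots> = (\<Sum>i\<in>{1..n}. of_nat (card (?B i) * card (Aset R k (n-i))))"
      by (intro sum.cong refl) (simp add: hg Suc.IH)
    also have "\<dots> = of_nat (card (Aset R (Suc k) n))"
      by (simp add: card_Aset_Suc[OF assms(1,2)])
    finally show ?thesis .
  qed
qed

lemma app_x_eq:
  "x \<notin> set u \<Longrightarrow> x \<notin> set v \<Longrightarrow> u @ x # a = v @ x # b \<Longrightarrow> u = v \<and> a = b"
proof (induction u arbitrary: v)
  case Nil
  then show ?case by (cases v) auto
next
  case (Cons c u)
  then show ?case by (cases v) auto
qed

lemma joinx_props:
  assumes "\<forall>u\<in>set ws. x \<notin> set u" "ws \<noteq> []"
  shows "count_list (joinx x ws) x = length ws - 1
    \<and> length (joinx x ws) = sum_list (map length ws) + length ws - 1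
    \<and> set (joinx x ws) \<subseteq> insert x (\<Union>u\<in>set ws. set u)"
  using assms
proof (induction x ws rule: joinx.induct)
  case (1 x) then show ?case by simp
next
  case (2 x u) then show ?case by (auto simp: count_list_0_iff)
next
  case (3 x u v us)
  then show ?case by (auto simp: count_list_0_iff)
qed

lemma joinx_inj:
  assumes "\<forall>u\<in>set ws. x \<notin> set u" "ws \<noteq> []" "\<forall>u\<in>set vs. x \<notin> set u" "vs \<noteq> []"
    "joinx x ws = joinx x vs"
  shows "ws = vs"
  using assms
proof (induction x ws arbitrary: vs rule: joinx.induct)
  case (1 x) then show ?case by simp
next
  case (2 x u)
  consider "vs = []" | v where "vs = [v]" | v v' vs' where "vs = v#v'#vs'"
    by (metis list.exhaust)
  then show ?case using 2 by cases auto
next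
  case (3 x u v us)
  consider "vs = []" | v' where "vs = [v']" | v' v'' vs' where "vs = v'#v''#vs'"
    by (metis list.exhaust)
  then show ?case
  proof cases
    case 3
    then have "u = v' \<and> joinx x (v # us) = joinx x (v'' # vs')"
      using app_x_eq[of x u v'] "3.prems" by auto
    then show ?thesis using "3.IH"[of "v'' # vs'"] "3.prems" \<open>vs = v' # v'' # vs'\<close> by auto
  qed (use 3 in auto)
qed

theorem proposition14:
  fixes f0 :: "nat \<Rightarrow> complex" and m :: nat
    and \<alpha> :: "'a set" and R :: "'a list set" and x :: "'a"
  assumes f01: "f0 1 = 1"
    and m1: "m > 1"
    and fin: "finite \<alpha>"
    and Rwords: "R \<subseteq> lists \<alpha>"
    and hR: "\<And>n. n \<ge> 1 \<Longrightarrow>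
        fiter f0 (m - 1) n = of_nat (card {w \<in> lists \<alpha>. length w = n - 1 \<and> w \<in> R})"
    and xnot: "x \<notin> \<alpha>"
  shows "\<forall>n k. 1 \<le> k \<and> k \<le> n \<longrightarrow>
    cm f0 m n k = of_nat (card {w \<in> lists (insert x \<alpha>). length w = n - 1 \<and>
                                   count_list w x = k - 1 \<and> restricted \<alpha> R x w})"
proof (intro allI impI)
  fix n k :: nat assume nk: "1 \<le> k \<and> k \<le> n"
  have xfree: "\<forall>u\<in>set ws. x \<notin> set u" if "set ws \<subseteq> R" for ws
    using that Rwords xnot by auto
  have eq: "{w \<in> lists (insert x \<alpha>). length w = n - 1 \<and>
             count_list w x = k - 1 \<and> restricted \<alpha> R x w} = joinx x ` Aset R k n"
  proof (rule set_eqI, rule iffI)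
    fix w assume "w \<in> {w \<in> lists (insert x \<alpha>). length w = n - 1 \<and>
             count_list w x = k - 1 \<and> restricted \<alpha> R x w}"
    then obtain ws where w: "ws \<noteq> []" "w = joinx x ws" "\<forall>u\<in>set ws. set u \<subseteq> \<alpha> \<and> u \<in> R"
      "length w = n - 1" "count_list w x = k - 1"
      by (auto simp: restricted_def)
    have sR: "set ws \<subseteq> R" using w by auto
    note P = joinx_props[OF xfree[OF sR] w(1)]
    have "length ws = k" using P w nk by (cases ws) auto
    moreover have "sum_list (map length ws) + k = n" using P w nk \<open>length ws = k\<close> by auto
    ultimately show "w \<in> joinx x ` Aset R k n" using w sR by (auto simp: Aset_def)
  next
    fix w assume "w \<in> joinx x ` Aset R k n"
    then obtain ws where ws: "w = joinx x ws" "length ws = k" "set ws \<subseteq> R"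
      "sum_list (map length ws) + k = n" by (auto simp: Aset_def)
    have ne: "ws \<noteq> []" using ws nk by auto
    note P = joinx_props[OF xfree[OF ws(3)] ne]
    have "set w \<subseteq> insert x \<alpha>" using P ws Rwords by fastforce
    moreover have "restricted \<alpha> R x w" unfolding restricted_def
      using ne ws Rwords by fastforce
    ultimately show "w \<in> {w \<in> lists (insert x \<alpha>). length w = n - 1 \<and>
             count_list w x = k - 1 \<and> restricted \<alpha> R x w}"
      using P ws by auto
  qed
  have "inj_on (joinx x) (Aset R k n)"
  proof (rule inj_onI)
    fix ws vs assume "ws \<in> Aset R k n" "vs \<in> Aset R k n" "joinx x ws = joinx x vs"
    then have h: "set ws \<subseteq> R" "set vs \<subseteq> R" "ws \<noteq> []" "vs \<noteq> []" "joinx x ws = joinx x vs"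
      using nk by (auto simp: Aset_def)
    show "ws = vs" using joinx_inj[OF xfree[OF h(1)] h(3) xfree[OF h(2)] h(4) h(5)] .
  qed
  then have "card (joinx x ` Aset R k n) = card (Aset R k n)" by (rule card_image)
  moreover have "cm f0 m n k = of_nat (card (Aset R k n))"
    unfolding cm_def using ctri_Aset[OF fin Rwords hR] by simp
  ultimately show "cm f0 m n k = of_nat (card {w \<in> lists (insert x \<alpha>). length w = n - 1 \<and>
             count_list w x = k - 1 \<and> restricted \<alpha> R x w})"
    using eq by simp
qed

end
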